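(* Let $\mathcal{P}$ be a unital partition of the cyclic group $G=\mu_m$ and let $d,d'$ be divisors of $m$. Then $\mathcal{P}_d\cap\mathcal{P}_{d'}\neq\emptyset$ if and only if $\mathcal{P}_d=\mathcal{P}_{d'}$.
   Context: A unital partition of a finite commutative group $G$ is a partition $G=\{1\}\sqcup A_0\sqcup\dots\sqcup A_s$ such that, with $a_i=\sum_{x\in A_i}x\in\mathbb{Z}[G]$, the $\mathbb{Z}$-span of $1$ and the $a_i$ is closed under multiplication in $\mathbb{Z}[G]$. For $d\mid m$, $\mathcal{P}_d$ is the set of members of $\mathcal{P}$ containing an element of order exactly $d$. *)

theory Defs
  imports Main "HOL-Library.Disjoint_Sets"
begin

text \<open>The cyclic group mu_m is modelled (additively) as Z/mZ with carrier {0..<m},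
  identity 0 and operation (a + b) mod m.  Elements of the group ring Z[G] are
  functions nat => int (supported on {0..<m}); the element x of G corresponds to
  the indicator of {x}.\<close>

definition cyc_order :: "nat \<Rightarrow> nat \<Rightarrow> nat" where
  "cyc_order m x = (LEAST n. 0 < n \<and> (n * x) mod m = 0)"

definition grp_ring_mult :: "nat \<Rightarrow> (nat \<Rightarrow> int) \<Rightarrow> (nat \<Rightarrow> int) \<Rightarrow> nat \<Rightarrow> int" where
  "grp_ring_mult m f g x =
     (\<Sum>a<m. \<Sum>b<m. if (a + b) mod m = x then f a * g b else 0)"

definition block_span :: "nat set set \<Rightarrow> (nat \<Rightarrow> int) set" where
  "block_span P = {f. \<exists>c :: nat set \<Rightarrow> int. f = (\<lambda>x. \<Sum>B\<in>P. c B * (if x \<in> B then 1 else 0))}"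

definition unital_partition :: "nat \<Rightarrow> nat set set \<Rightarrow> bool" where
  "unital_partition m P \<longleftrightarrow>
     partition_on {0..<m} P \<and> {0} \<in> P \<and>
     (\<forall>f\<in>block_span P. \<forall>g\<in>block_span P. grp_ring_mult m f g \<in> block_span P)"

definition blocks_of_order :: "nat \<Rightarrow> nat set set \<Rightarrow> nat \<Rightarrow> nat set set" where
  "blocks_of_order m P d = {B \<in> P. \<exists>x\<in>B. cyc_order m x = d}"

end

theory Submission
  imports Defs "HOL-Computational_Algebra.Computational_Algebra" "HOL-Number_Theory.Cong"
begin


lemma freshman2:
  fixes a b :: "'a::comm_ring_1" and p :: nat
  assumes "prime p"
  shows "\<exists>c. (a + b)^p = a^p + b^p + of_nat p * c"
proof -
  have p1: "p > 0" using assms prime_gt_0_nat by blast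
  have "(a + b)^p = (\<Sum>k\<le>p. of_nat (p choose k) * a^k * b^(p-k))" by (rule binomial_ring)
  also have "{..p} = insert 0 (insert p {1..<p})" using p1 by auto
  also have "(\<Sum>k\<in>insert 0 (insert p {1..<p}). of_nat (p choose k) * a^k * b^(p-k))
     = b^p + (a^p + (\<Sum>k\<in>{1..<p}. of_nat (p choose k) * a^k * b^(p-k)))"
    using p1 by (subst sum.insert; auto)+
  also have "(\<Sum>k\<in>{1..<p}. of_nat (p choose k) * a^k * b^(p-k)) =
      (\<Sum>k\<in>{1..<p}. of_nat p * (of_nat ((p choose k) div p) * a^k * b^(p-k)))"
  proof (rule sum.cong)
    fix k assume "k \<in> {1..<p}"
    then have "p dvd (p choose k)" using dvd_choose_prime[of k p] assms by auto
    then have "(p choose k) = p * ((p choose k) div p)" by simp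
    then have "(of_nat (p choose k)::'a) = of_nat p * of_nat ((p choose k) div p)"
      by (metis of_nat_mult)
    then show "of_nat (p choose k) * a^k * b^(p-k) = of_nat p * (of_nat ((p choose k) div p) * a^k * b^(p-k))"
      by (simp add: mult.assoc)
  qed simp
  finally have eq: "(a + b)^p = b^p + (a^p + (\<Sum>k\<in>{1..<p}. of_nat p * (of_nat ((p choose k) div p) * a^k * b^(p-k))))" .
  show ?thesis
    by (rule exI[of _ "\<Sum>k\<in>{1..<p}. of_nat ((p choose k) div p) * a^k * b^(p-k)"])
       (simp only: eq sum_distrib_left[symmetric] add_ac)
qed

lemma freshman:
  fixes f :: "'b \<Rightarrow> 'a::comm_ring_1" and p :: nat
  assumes "prime p" "finite S"
  shows "\<exists>c. (\<Sum>x\<in>S. f x)^p = (\<Sum>x\<in>S. f x ^ p) + of_nat p * c"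
  using assms(2)
proof (induction S rule: finite_induct)
  case empty
  have "p > 0" using assms prime_gt_0_nat by blast
  then show ?case by (auto simp: power_0_left intro: exI[of _ 0])
next
  case (insert x F)
  then obtain c where c: "(\<Sum>x\<in>F. f x)^p = (\<Sum>x\<in>F. f x ^ p) + of_nat p * c" by blast
  obtain c2 where c2: "(f x + (\<Sum>x\<in>F. f x))^p = f x ^ p + (\<Sum>x\<in>F. f x)^p + of_nat p * c2"
    using freshman2[OF assms(1)] by blast
  show ?case using insert c c2 by (auto simp: algebra_simps intro!: exI[of _ "c + c2"])
qed


definition phi :: "nat \<Rightarrow> int poly \<Rightarrow> nat \<Rightarrow> int" where
  "phi m q y = (\<Sum>i\<le>degree q. if i mod m = y then coeff q i else 0)"

lemma phi_bound:
  assumes "degree q \<le> n"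
  shows "phi m q y = (\<Sum>i\<le>n. if i mod m = y then coeff q i else 0)"
  unfolding phi_def
  by (rule sum.mono_neutral_left) (use assms in \<open>auto simp: coeff_eq_0\<close>)

lemma phi_add: "phi m (q + r) = (\<lambda>y. phi m q y + phi m r y)"
proof
  fix y
  let ?n = "max (degree q) (degree r)"
  have "degree (q + r) \<le> ?n" by (rule degree_add_le) auto
  then have "phi m (q + r) y = (\<Sum>i\<le>?n. if i mod m = y then coeff (q + r) i else 0)"
    by (rule phi_bound)
  also have "\<dots> = (\<Sum>i\<le>?n. if i mod m = y then coeff q i else 0) + (\<Sum>i\<le>?n. if i mod m = y then coeff r i else 0)"
    by (auto simp: sum.distrib[symmetric] intro!: sum.cong)
  also have "\<dots> = phi m q y + phi m r y"
    by (simp add: phi_bound[where n="?n"])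
  finally show "phi m (q + r) y = phi m q y + phi m r y" .
qed

lemma phi_zero: "phi m 0 = (\<lambda>y. 0)"
  unfolding phi_def by (auto intro!: sum.neutral)

lemma phi_sum: "finite S \<Longrightarrow> phi m (\<Sum>i\<in>S. f i) = (\<lambda>y. \<Sum>i\<in>S. phi m (f i) y)"
  by (induction S rule: finite_induct) (auto simp: phi_zero phi_add)

lemma phi_monom: "phi m (monom a i) y = (if i mod m = y then a else 0)"
proof -
  have "phi m (monom a i) y = (\<Sum>k\<le>i. if k mod m = y then coeff (monom a i) k else 0)"
    by (rule phi_bound) (rule degree_monom_le)
  also have "\<dots> = (\<Sum>k\<le>i. if k = i then (if i mod m = y then a else 0) else 0)"
    by (rule sum.cong) (auto simp: coeff_monom)
  also have "\<dots> = (if i mod m = y then a else 0)" by (simp add: sum.delta')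
  finally show ?thesis .
qed

lemma phi_smult: "phi m (of_nat p * q) y = int p * phi m q y"
proof -
  have "of_nat p * q = smult (int p) q" by (simp add: of_nat_poly)
  then show ?thesis
      by (simp add: phi_bound[where n="degree q"] degree_smult_le sum_distrib_left if_distrib cong: if_cong)
qed

lemma if_sum0: "(if c then sum h S else (0::int)) = (\<Sum>n\<in>S. if c then h n else 0)"
  by simp

lemma conv_sum_left:
  "finite S \<Longrightarrow> grp_ring_mult m (\<lambda>y. \<Sum>i\<in>S. f i y) g x = (\<Sum>i\<in>S. grp_ring_mult m (f i) g x)"
proof -
  have "grp_ring_mult m (\<lambda>y. \<Sum>i\<in>S. f i y) g x = (\<Sum>a<m. \<Sum>b<m. \<Sum>i\<in>S. if (a + b) mod m = x then f i a * g b else 0)"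
    unfolding grp_ring_mult_def by (intro sum.cong refl) (auto simp: sum_distrib_right)
  also have "\<dots> = (\<Sum>a<m. \<Sum>i\<in>S. \<Sum>b<m. if (a + b) mod m = x then f i a * g b else 0)"
    by (rule sum.cong[OF refl], rule sum.swap)
  also have "\<dots> = (\<Sum>i\<in>S. \<Sum>a<m. \<Sum>b<m. if (a + b) mod m = x then f i a * g b else 0)"
    by (rule sum.swap)
  finally show ?thesis unfolding grp_ring_mult_def .
qed

lemma conv_sum_right:
  "finite S \<Longrightarrow> grp_ring_mult m g (\<lambda>y. \<Sum>i\<in>S. f i y) x = (\<Sum>i\<in>S. grp_ring_mult m g (f i) x)"
proof -
  have "grp_ring_mult m g (\<lambda>y. \<Sum>i\<in>S. f i y) x = (\<Sum>a<m. \<Sum>b<m. \<Sum>i\<in>S. if (a + b) mod m = x then g a * f i b else 0)"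
    unfolding grp_ring_mult_def by (intro sum.cong refl) (auto simp: sum_distrib_left)
  also have "\<dots> = (\<Sum>a<m. \<Sum>i\<in>S. \<Sum>b<m. if (a + b) mod m = x then g a * f i b else 0)"
    by (rule sum.cong[OF refl], rule sum.swap)
  also have "\<dots> = (\<Sum>i\<in>S. \<Sum>a<m. \<Sum>b<m. if (a + b) mod m = x then g a * f i b else 0)"
    by (rule sum.swap)
  finally show ?thesis unfolding grp_ring_mult_def .
qed

lemma conv_delta:
  assumes "0 < m"
  shows "grp_ring_mult m (\<lambda>y. if i mod m = y then a else 0) (\<lambda>y. if j mod m = y then b else 0) x
     = (if (i + j) mod m = x then a * b else 0)"
proof -
  let ?f = "\<lambda>y. if i mod m = y then a else (0::int)"
  have inner: "(\<Sum>b'<m. if (a' + b') mod m = x then ?f a' * (if j mod m = b' then b else 0) else 0)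
     = (if (a' + j mod m) mod m = x then ?f a' * b else 0)" for a'
  proof -
    have "(\<Sum>b'<m. if (a' + b') mod m = x then ?f a' * (if j mod m = b' then b else 0) else 0)
       = (\<Sum>b'<m. if b' = j mod m then (if (a' + j mod m) mod m = x then ?f a' * b else 0) else 0)"
      by (rule sum.cong) auto
    also have "\<dots> = (if (a' + j mod m) mod m = x then ?f a' * b else 0)"
      using assms by (simp add: sum.delta')
    finally show ?thesis .
  qed
  have "grp_ring_mult m ?f (\<lambda>y. if j mod m = y then b else 0) x
      = (\<Sum>a'<m. if (a' + j mod m) mod m = x then ?f a' * b else 0)"
    unfolding grp_ring_mult_def using inner by simp
  also have "\<dots> = (\<Sum>a'<m. if a' = i mod m then (if (i mod m + j mod m) mod m = x then a * b else 0) else 0)"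
    by (rule sum.cong) auto
  also have "\<dots> = (if (i mod m + j mod m) mod m = x then a * b else 0)"
    using assms by (simp add: sum.delta')
  finally show ?thesis by (simp add: mod_add_eq)
qed

lemma phi_mult:
  assumes "0 < m"
  shows "phi m (q * r) = grp_ring_mult m (phi m q) (phi m r)"
proof
  fix x
  have qr: "q * r = (\<Sum>i\<le>degree q. \<Sum>j\<le>degree r. monom (coeff q i * coeff r j) (i + j))"
  proof -
    have "q * r = (\<Sum>i\<le>degree q. monom (coeff q i) i) * (\<Sum>j\<le>degree r. monom (coeff r j) j)"
      by (simp add: poly_as_sum_of_monoms)
    also have "\<dots> = (\<Sum>i\<le>degree q. \<Sum>j\<le>degree r. monom (coeff q i) i * monom (coeff r j) j)"
      by (rule sum_product)
    finally show ?thesis by (simp add: mult_monom)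
  qed
  have "phi m (q * r) x = (\<Sum>i\<le>degree q. \<Sum>j\<le>degree r. if (i + j) mod m = x then coeff q i * coeff r j else 0)"
    by (simp add: qr phi_sum phi_monom)
  also have "\<dots> = (\<Sum>i\<le>degree q. \<Sum>j\<le>degree r. grp_ring_mult m (\<lambda>y. if i mod m = y then coeff q i else 0) (\<lambda>y. if j mod m = y then coeff r j else 0) x)"
    by (simp add: conv_delta[OF assms])
  also have "\<dots> = grp_ring_mult m (\<lambda>y. \<Sum>i\<le>degree q. if i mod m = y then coeff q i else 0) (\<lambda>y. \<Sum>j\<le>degree r. if j mod m = y then coeff r j else 0) x"
    by (simp add: conv_sum_left conv_sum_right)
  finally show "phi m (q * r) x = grp_ring_mult m (phi m q) (phi m r) x"
    by (simp add: phi_def[abs_def])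
qed

lemma phi_one: "phi m 1 = (\<lambda>y. if y = 0 then 1 else 0)"
  using phi_monom[of m 1 0] by (auto simp: one_poly_eq_simps(1)[symmetric] monom_eq_1 intro!: ext)


definition ind :: "nat set \<Rightarrow> nat \<Rightarrow> int" where
  "ind B = (\<lambda>y. if y \<in> B then 1 else 0)"

definition mset_mult :: "nat \<Rightarrow> nat \<Rightarrow> nat set \<Rightarrow> nat set" where
  "mset_mult m k B = (\<lambda>x. k * x mod m) ` B"

fun pw :: "nat \<Rightarrow> (nat \<Rightarrow> int) \<Rightarrow> nat \<Rightarrow> nat \<Rightarrow> int" where
  "pw m f 0 = (\<lambda>y. if y = 0 then 1 else 0)"
| "pw m f (Suc n) = grp_ring_mult m f (pw m f n)"

lemma up_union: "unital_partition m P \<Longrightarrow> \<Union>P = {0..<m}"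
  unfolding unital_partition_def partition_on_def by (elim conjE)

lemma up_finite: "unital_partition m P \<Longrightarrow> finite P"
  using up_union[of m P] finite_UnionD[of P] by simp

lemma up_cover: "unital_partition m P \<Longrightarrow> z < m \<Longrightarrow> \<exists>D\<in>P. z \<in> D"
proof -
  assume "unital_partition m P" "z < m"
  then have "z \<in> \<Union>P" using up_union[of m P] by simp
  then show ?thesis by (rule UnionE) blast
qed

lemma up_sub: "unital_partition m P \<Longrightarrow> B \<in> P \<Longrightarrow> x \<in> B \<Longrightarrow> x < m"
proof -
  assume a: "unital_partition m P" "B \<in> P" "x \<in> B"
  then have "x \<in> \<Union>P" by (rule_tac UnionI)
  then show ?thesis using up_union[OF a(1)] by simp
qed

lemma up_eq: "unital_partition m P \<Longrightarrow> B \<in> P \<Longrightarrow> C \<in> P \<Longrightarrow> y \<in> B \<Longrightarrow> y \<in> C \<Longrightarrow> B = C"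
proof (rule ccontr)
  assume a: "unital_partition m P" "B \<in> P" "C \<in> P" "y \<in> B" "y \<in> C" "B \<noteq> C"
  have "disjoint P" using a(1) unfolding unital_partition_def partition_on_def by (elim conjE)
  then have "disjnt B C" using a(2,3,6) by (rule pairwiseD)
  then show False using a(4,5) by (simp add: disjnt_iff)
qed

lemma span_ind:
  assumes "unital_partition m P" "B \<in> P"
  shows "ind B \<in> block_span P"
proof -
  have "ind B = (\<lambda>x. \<Sum>B'\<in>P. (if B' = B then 1 else 0) * (if x \<in> B' then 1 else 0))"
  proof
    fix x
    have "(\<Sum>B'\<in>P. (if B' = B then 1 else 0) * (if x \<in> B' then 1 else 0))
       = (\<Sum>B'\<in>P. if B' = B then (if x \<in> B then 1 else 0) else (0::int))"
      by (rule sum.cong) auto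
    also have "\<dots> = ind B x" using up_finite[OF assms(1)] assms(2) by (simp add: sum.delta ind_def)
    finally show "ind B x = (\<Sum>B'\<in>P. (if B' = B then 1 else 0) * (if x \<in> B' then 1 else 0))" by simp
  qed
  then show ?thesis unfolding block_span_def
    by (intro CollectI exI[of _ "\<lambda>B'. if B' = B then 1 else 0"])
qed

lemma span_val:
  assumes "unital_partition m P" "f \<in> block_span P" "C \<in> P" "y \<in> C" "y' \<in> C"
  shows "f y = f y'"
proof -
  obtain c where c: "f = (\<lambda>x. \<Sum>B\<in>P. c B * (if x \<in> B then 1 else 0))"
    using assms(2) unfolding block_span_def by blast
  have val: "f z = c C" if "z \<in> C" for z
  proof -
    have "f z = (\<Sum>B\<in>P. if B = C then c C else 0)"
      unfolding c
      by (rule sum.cong) (use that up_eq[OF assms(1) _ assms(3)] in auto)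
    also have "\<dots> = c C" using up_finite[OF assms(1)] assms(3) by (simp add: sum.delta)
    finally show ?thesis .
  qed
  show ?thesis using val assms(4,5) by simp
qed

lemma pw_span:
  assumes "unital_partition m P" "f \<in> block_span P"
  shows "pw m f n \<in> block_span P"
proof (induction n)
  case 0
  have "{0} \<in> P" using assms(1) unfolding unital_partition_def by blast
  then have "ind {0} \<in> block_span P" using span_ind[OF assms(1)] by blast
  moreover have "ind {0} = pw m f 0" by (auto simp: ind_def)
  ultimately show ?case by simp
next
  case (Suc n)
  then show ?case using assms unfolding unital_partition_def by simp
qed

lemma phi_pow: "0 < m \<Longrightarrow> phi m (A ^ n) = pw m (phi m A) n"
  by (induction n) (simp_all add: phi_one phi_mult)

lemma phi_A:
  assumes "finite B" "B \<subseteq> {..<m}"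
  shows "phi m (\<Sum>x\<in>B. monom 1 x) = ind B"
proof
  fix y
  have "phi m (\<Sum>x\<in>B. monom 1 x) y = (\<Sum>x\<in>B. if x = y then 1 else 0)"
  proof -
    have "phi m (\<Sum>x\<in>B. monom 1 x) y = (\<Sum>x\<in>B. if x mod m = y then 1 else 0)"
      using assms by (simp add: phi_sum phi_monom)
    also have "\<dots> = (\<Sum>x\<in>B. if x = y then 1 else 0)"
      by (rule sum.cong) (use assms(2) in auto)
    finally show ?thesis .
  qed
  also have "\<dots> = ind B y" using assms(1) by (simp add: sum.delta ind_def)
  finally show "phi m (\<Sum>x\<in>B. monom 1 x) y = ind B y" .
qed

lemma mult_inj:
  fixes p m x x0 :: nat
  assumes "coprime p m" "x < m" "x0 < m" "p * x mod m = p * x0 mod m"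
  shows "x = x0"
proof -
  have "[x * p = x0 * p] (mod m)" using assms(4) by (simp add: cong_def mult.commute)
  then have "[x = x0] (mod m)" using cong_mult_rcancel_nat[OF assms(1)] by simp
  then show ?thesis using assms(2,3) by (simp add: cong_def)
qed

lemma multiplier_prime:
  assumes up: "unital_partition m P" and m: "0 < m" and p: "prime p" "coprime p m"
    and B: "B \<in> P" and C: "C \<in> P" and y: "y \<in> C" "y \<in> mset_mult m p B" and y': "y' \<in> C"
  shows "y' \<in> mset_mult m p B"
proof (rule ccontr)
  assume ny: "y' \<notin> mset_mult m p B"
  have Bsub: "B \<subseteq> {..<m}" using up_sub[OF up B] by auto
  have finB: "finite B" by (rule finite_subset[OF Bsub]) simp
  define A where "A = (\<Sum>x\<in>B. monom (1::int) x)"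
  obtain c where c: "A^p = (\<Sum>x\<in>B. (monom 1 x)^p) + of_nat p * c"
    unfolding A_def using freshman[OF p(1) finB] by blast
  define g where "g z = (\<Sum>x\<in>B. if (x * p) mod m = z then (1::int) else 0)" for z
  have phiAp: "phi m (A^p) z = g z + int p * phi m c z" for z
    unfolding c by (simp add: phi_add phi_smult phi_sum[OF finB] monom_power phi_monom g_def)
  have "pw m (ind B) p y = pw m (ind B) p y'"
    using span_val[OF up pw_span[OF up span_ind[OF up B]] C y(1) y'] .
  moreover have "pw m (ind B) p = phi m (A^p)"
    using phi_pow[OF m, of A p] phi_A[OF finB Bsub] unfolding A_def by simp
  ultimately have "phi m (A^p) y = phi m (A^p) y'" by simp
  then have eq: "g y + int p * phi m c y = g y' + int p * phi m c y'"
    using phiAp by simp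
  have g0: "g y' = 0" unfolding g_def
    using ny by (intro sum.neutral) (auto simp: mset_mult_def mult.commute)
  obtain x0 where x0: "x0 \<in> B" "y = p * x0 mod m" using y(2) unfolding mset_mult_def by blast
  have "g y = (\<Sum>x\<in>B. if x = x0 then 1 else 0)"
    unfolding g_def
  proof (rule sum.cong)
    fix x assume "x \<in> B"
    then show "(if x * p mod m = y then 1 else 0) = (if x = x0 then (1::int) else 0)"
      using mult_inj[OF p(2), of x x0] x0 Bsub by (auto simp: mult.commute)
  qed simp
  then have g1: "g y = 1" using x0(1) finB by (simp add: sum.delta')
  have "1 = int p * (phi m c y' - phi m c y)" using eq g0 g1 by (simp add: algebra_simps)
  then have "int p dvd 1" by (metis dvd_triv_left)
  then show False using p(1) by (simp add: prime_gt_1_nat)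
qed



lemma mset_mult_comp:
  "y \<in> mset_mult m (p * q) B \<longleftrightarrow> y \<in> mset_mult m p (mset_mult m q B)"
proof -
  have "(p * q) * x mod m = p * (q * x mod m) mod m" for x
    by (simp add: mod_mult_right_eq mult.assoc)
  then show ?thesis unfolding mset_mult_def by (auto simp: image_image)
qed

lemma multiplier:
  assumes up: "unital_partition m P" and m: "0 < m"
  shows "k \<ge> 1 \<Longrightarrow> coprime k m \<Longrightarrow> B \<in> P \<Longrightarrow> C \<in> P \<Longrightarrow> y \<in> C \<Longrightarrow> y \<in> mset_mult m k B
     \<Longrightarrow> y' \<in> C \<Longrightarrow> y' \<in> mset_mult m k B"
proof (induction k arbitrary: B C y y' rule: less_induct)
  case (less k)
  show ?case
  proof (cases "k = 1")
    case True
    then have M: "mset_mult m k B = B" using up_sub[OF up less.prems(3)]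
      unfolding mset_mult_def by (auto simp: image_iff) 
    then show ?thesis using less.prems up_eq[OF up, of B C y] by auto
  next
    case False
    then have "k \<noteq> 1" by simp
    then obtain p where p: "prime p" "p dvd k" using prime_factor_nat by blast
    then obtain q where q: "k = p * q" by (auto elim: dvdE)
    have q1: "q \<ge> 1" using q less.prems(1) by (cases q) auto
    have qk: "q < k" using q q1 prime_gt_1_nat[OF p(1)] by simp
    have cp: "coprime p m" "coprime q m" using less.prems(2) q by auto
    from less.prems(6) obtain x where x: "x \<in> B" "y = k * x mod m" unfolding mset_mult_def by blast
    define z where "z = q * x mod m"
    have zlt: "z < m" using m z_def by simp
    obtain D where D: "D \<in> P" "z \<in> D" using up_cover[OF up zlt] by blast
    have zM: "z \<in> mset_mult m q B" using x(1) unfolding z_def mset_mult_def by blast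
    have "y \<in> mset_mult m p D"
      using D(2) x(2) unfolding mset_mult_def z_def q
      by (auto simp: mod_mult_right_eq mult.assoc intro!: image_eqI[of _ _ "q * x mod m"])
    then have "y' \<in> mset_mult m p D"
      using multiplier_prime[OF up m p(1) cp(1) D(1) less.prems(4,5) _ less.prems(7)] by blast
    then obtain z' where z': "z' \<in> D" "y' = p * z' mod m" unfolding mset_mult_def by blast
    have "z' \<in> mset_mult m q B"
      using less.IH[OF qk q1 cp(2) less.prems(3) D(1) D(2) zM z'(1)] .
    then have "y' \<in> mset_mult m p (mset_mult m q B)"
      using z'(2) unfolding mset_mult_def by blast
    then show ?thesis using mset_mult_comp q by simp
  qed
qed



lemma order_formula:
  fixes m x :: nat
  assumes m: "0 < m"
  shows "cyc_order m x = m div gcd x m"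
proof -
  define g where "g = gcd x m"
  have g0: "g > 0" using m g_def by simp
  obtain m' where m': "m = g * m'" using g_def by (metis gcd_dvd2 dvdE)
  obtain x' where x': "x = g * x'" using g_def by (metis gcd_dvd1 dvdE)
  have mdiv: "m div g = m'" using m' g0 by simp
  have cop: "coprime x' m'"
    using div_gcd_coprime[of x m] m unfolding g_def[symmetric] using m' x' g0 by simp
  have m'0: "m' > 0" using m m' by simp
  have iff: "(n * x) mod m = 0 \<longleftrightarrow> m' dvd n" for n
  proof -
    have "(n * x) mod m = 0 \<longleftrightarrow> g * m' dvd g * (n * x')" using m' x' by (simp add: ac_simps dvd_eq_mod_eq_0[symmetric])
    also have "\<dots> \<longleftrightarrow> m' dvd n * x'" using g0 by simp
    also have "\<dots> \<longleftrightarrow> m' dvd n" using cop by (simp add: coprime_dvd_mult_left_iff coprime_commute)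
    finally show ?thesis .
  qed
  have "cyc_order m x = m'"
    unfolding cyc_order_def
  proof (rule Least_equality)
    show "0 < m' \<and> m' * x mod m = 0" using iff m'0 by simp
    fix n assume "0 < n \<and> n * x mod m = 0"
    then show "m' \<le> n" using iff by (simp add: dvd_imp_le)
  qed
  then show ?thesis using mdiv g_def by simp
qed

lemma order_mult:
  fixes m k w :: nat
  assumes m: "0 < m" and k: "coprime k m"
  shows "cyc_order m (k * w mod m) = cyc_order m w"
proof -
  have "gcd (k * w mod m) m = gcd w m"
  proof -
    have "gcd (k * w mod m) m = gcd (k * w) m" using m by (simp add: gcd_mod_left)
    also have "\<dots> = gcd w m" using k by (simp add: gcd_mult_left_left_cancel coprime_commute)
    finally show ?thesis .
  qed
  then show ?thesis using order_formula[OF m] by simp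
qed

lemma coprimeI_primes:
  fixes a b :: nat
  assumes "a \<noteq> 0" "\<And>p. prime p \<Longrightarrow> p dvd a \<Longrightarrow> p dvd b \<Longrightarrow> False"
  shows "coprime a b"
proof (rule ccontr)
  assume "\<not> coprime a b"
  then have "gcd a b \<noteq> 1" by (simp add: coprime_iff_gcd_eq_1)
  moreover have "gcd a b \<noteq> 0" using assms(1) by simp
  ultimately obtain p where "prime p" "p dvd gcd a b" using prime_factor_nat by blast
  then show False using assms(2) by auto
qed

lemma unit_exists:
  fixes m x z d :: nat
  assumes m: "0 < m" and xm: "x < m" and zm: "z < m"
    and ox: "cyc_order m x = d" and oz: "cyc_order m z = d"
  shows "\<exists>k. k \<ge> 1 \<and> coprime k m \<and> k * z mod m = x"
proof -
  define g where "g = gcd x m"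
  have g0: "g > 0" using m g_def by simp
  have gd: "g dvd m" using g_def by simp
  have dg: "d = m div g" using ox order_formula[OF m] g_def by simp
  have gz: "gcd z m = g"
  proof -
    have "m div gcd z m = m div g" using oz dg order_formula[OF m] by simp
    moreover have "gcd z m dvd m" "gcd z m > 0" using m by auto
    moreover have "gcd z m * (m div gcd z m) = m" by simp
    moreover have "g * (m div g) = m" using gd by simp
    moreover have "m div g > 0" using gd m by (metis dvd_mult_div_cancel mult_0_right neq0_conv)
    ultimately show ?thesis by (metis mult_right_cancel neq0_conv)
  qed
  obtain x' where x': "x = g * x'" using g_def by (metis gcd_dvd1 dvdE)
  obtain z' where z': "z = g * z'" using gz by (metis gcd_dvd1 dvdE)
  have md: "m = g * d" using dg gd by simp
  have d0: "d > 0" using md m by simp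
  have cx: "coprime x' d"
    using div_gcd_coprime[of x m] m unfolding g_def[symmetric] using md x' g0 by simp
  have cz: "coprime z' d"
    using div_gcd_coprime[of z m] m unfolding gz using md z' g0 by simp
  obtain u where u: "[z' * u = Suc 0] (mod d)" using cong_solve_coprime_nat[OF cz] by blast
  have cu: "coprime u d" using u coprime_iff_invertible_nat[of u d] by (auto simp: mult.commute)
  define k0 where "k0 = u * x'"
  have ck0: "coprime k0 d" using cu cx k0_def by simp
  define S where "S = {p. prime p \<and> p dvd m \<and> \<not> p dvd k0}"
  have finS: "finite S" unfolding S_def using m
    by (rule_tac finite_subset[of _ "{..m}"]) (auto dest: dvd_imp_le)
  define t where "t = \<Prod>S"
  have t0: "t > 0" unfolding t_def using finS by (auto simp: S_def prime_gt_0_nat intro!: prod_pos)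
  define k where "k = k0 + d * t"
  have k1: "k \<ge> 1" unfolding k_def using t0 d0 by (simp add: Suc_le_eq add_pos_pos)
  have tdvd: "p dvd t \<longleftrightarrow> p \<in> S" if pp: "prime p" for p
  proof
    assume "p dvd t"
    then obtain q where "q \<in> S" "p dvd q" unfolding t_def using prime_dvd_prod_iff[OF finS pp, of id] by auto
    moreover have "p = q" if "q \<in> S" "p dvd q" for q
      using that pp by (simp add: S_def primes_dvd_imp_eq)
    ultimately show "p \<in> S" by blast
  next
    assume "p \<in> S" then show "p dvd t" unfolding t_def using dvd_prodI[OF finS, of p "\<lambda>x. x"] by simp
  qed
  have ck: "coprime k m"
  proof (rule coprimeI_primes)
    show "k \<noteq> 0" using k1 by simp
    fix p assume p: "prime p" "p dvd k" "p dvd m"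
    show False
    proof (cases "p dvd k0")
      case True
      then have "\<not> p dvd d" using ck0 p(1)
        by (metis coprime_common_divisor_nat not_prime_1)
      have "p dvd d * t" using True p(2) unfolding k_def by (simp add: dvd_add_right_iff)
      then have "p dvd t" using \<open>\<not> p dvd d\<close> p(1) by (simp add: prime_dvd_mult_iff)
      then show False using tdvd[OF p(1)] True by (simp add: S_def)
    next
      case False
      then have "p \<in> S" using p by (simp add: S_def)
      then have "p dvd d * t" using tdvd[OF p(1)] by simp
      then have "p dvd k0" using p(2) unfolding k_def by (simp add: dvd_add_left_iff)
      then show False using False by simp
    qed
  qed
  have "[k * z' = k0 * z'] (mod d)"
    unfolding k_def by (simp add: cong_def algebra_simps)
  also have "[k0 * z' = x' * (z' * u)] (mod d)" unfolding k0_def by (simp add: ac_simps)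
  also have "[x' * (z' * u) = x' * Suc 0] (mod d)" using u by (rule cong_scalar_left)
  finally have c: "[k * z' = x'] (mod d)" by simp
  have "k * z mod m = g * (k * z' mod d)" using z' md by (simp add: ac_simps mod_mult_mult1)
  also have "\<dots> = g * (x' mod d)" using c by (simp add: cong_def)
  also have "\<dots> = x mod m" using x' md by (simp add: mod_mult_mult1)
  also have "\<dots> = x" using xm by simp
  finally show ?thesis using k1 ck by blast
qed


lemma order_exists:
  fixes m d :: nat
  assumes m: "0 < m" and d: "d dvd m"
  shows "cyc_order m ((m div d) mod m) = d"
proof -
  obtain q where q: "m = d * q" using d by (auto elim: dvdE)
  have q0: "q > 0" and d0: "d > 0" using q m by auto
  have mq: "m div d = q" using q d0 by simp
  have "gcd (q mod m) m = gcd q m" using m by (simp add: gcd_mod_left)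
  also have "\<dots> = q" using q by simp
  finally have "cyc_order m (q mod m) = m div q" using order_formula[OF m] by simp
  also have "\<dots> = d" using q q0 by simp
  finally show ?thesis using mq by simp
qed

lemma blocks_nonempty:
  assumes m: "0 < m" and up: "unital_partition m P" and d: "d dvd m"
  shows "blocks_of_order m P d \<noteq> {}"
proof -
  define w where "w = (m div d) mod m"
  have "w < m" using m w_def by simp
  then obtain D where D: "D \<in> P" "w \<in> D" using up_cover[OF up] by blast
  have "cyc_order m w = d" using order_exists[OF m d] w_def by simp
  then have "D \<in> blocks_of_order m P d" using D unfolding blocks_of_order_def by blast
  then show ?thesis by blast
qed

lemma blocks_sub:
  assumes m: "0 < m" and up: "unital_partition m P"
    and ne: "blocks_of_order m P d \<inter> blocks_of_order m P d' \<noteq> {}"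
  shows "blocks_of_order m P d \<subseteq> blocks_of_order m P d'"
proof
  obtain B where B: "B \<in> P" and "B \<in> blocks_of_order m P d" "B \<in> blocks_of_order m P d'" using ne unfolding blocks_of_order_def by blast
  then obtain x y where x: "x \<in> B" "cyc_order m x = d" and y: "y \<in> B" "cyc_order m y = d'"
    unfolding blocks_of_order_def by blast
  fix C assume "C \<in> blocks_of_order m P d"
  then obtain z where C: "C \<in> P" and z: "z \<in> C" "cyc_order m z = d"
    unfolding blocks_of_order_def by blast
  have xm: "x < m" using up_sub[OF up B x(1)] .
  have zm: "z < m" using up_sub[OF up C z(1)] .
  obtain k where k: "k \<ge> 1" "coprime k m" "k * z mod m = x"
    using unit_exists[OF m xm zm x(2) z(2)] by blast
  have "x \<in> mset_mult m k C" using k(3) z(1) unfolding mset_mult_def by blast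
  then have "y \<in> mset_mult m k C"
    using multiplier[OF up m k(1,2) C B x(1) _ y(1)] by blast
  then obtain w where w: "w \<in> C" "y = k * w mod m" unfolding mset_mult_def by blast
  have "cyc_order m w = d'" using order_mult[OF m k(2), of w] w(2) y(2) by simp
  then show "C \<in> blocks_of_order m P d'" using C w(1) unfolding blocks_of_order_def by blast
qed

theorem corollary3p4:
  fixes m d d' :: nat and P :: "nat set set"
  assumes "0 < m"
    and "unital_partition m P"
    and "d dvd m" and "d' dvd m"
  shows "blocks_of_order m P d \<inter> blocks_of_order m P d' \<noteq> {} \<longleftrightarrow>
         blocks_of_order m P d = blocks_of_order m P d'"
proof
  assume ne: "blocks_of_order m P d \<inter> blocks_of_order m P d' \<noteq> {}"
  then have ne': "blocks_of_order m P d' \<inter> blocks_of_order m P d \<noteq> {}" by (simp add: Int_commute)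
  show "blocks_of_order m P d = blocks_of_order m P d'"
    using blocks_sub[OF assms(1,2) ne] blocks_sub[OF assms(1,2) ne'] by (rule subset_antisym)
next
  assume eq: "blocks_of_order m P d = blocks_of_order m P d'"
  show "blocks_of_order m P d \<inter> blocks_of_order m P d' \<noteq> {}"
    using blocks_nonempty[OF assms(1,2,3)] eq by simp
qed

end
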